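(* Let $F$ be a field of characteristic $0$, $h\ge 0$ an integer, and $m=p+q$ with $p,q\ge0$ and $q\ge 1$. Let $z_1,\dots,z_m$ be variables with $\alpha(z_i)=d_i>0$, where $d_1,\dots,d_p$ are odd and $d_{p+1},\dots,d_m$ are even. Suppose $f\in\Gamma_{0,m}\cap T_{\mathbb{Z}}(E^h)$. Then $f\equiv f_1z_m+f_2\pmod I$, where $f_1\in\Gamma_{0,m-1}\cap T_{\mathbb{Z}}(E^h)$ is a multilinear polynomial in $z_1,\dots,z_{m-1}$, and $f_2$ is a linear combination of products of variables and of commutators $[z_i,z_j]$ in which $z_m$ occurs only inside commutators. Moreover $f_2\in\Gamma_{0,m}\cap T_{\mathbb{Z}}(E^h)$.
   Context: $L$ is a vector space over $F$ with basis $e_1,e_2,\dots$, $E$ its unital Grassmann algebra (basis $1$ and $e_{i_1}\cdots e_{i_k}$, $i_1<\cdots<i_k$, with $e_ie_j=-e_je_i$). $E^h$ is $E$ with the $\mathbb{Z}$-grading induced by $\|e_i\|=0$ for $1\le i\le h$ and $\|e_i\|=1$ for $i\ge h+1$ (basis monomials get the sum of degrees of their factors; $1$ has degree $0$). Graded polynomials live in the free unital associative algebra $F\langle X|\mathbb{Z}\rangle$ on countably many variables of each integer degree ($\alpha(x)$ = degree of $x$); $T_{\mathbb{Z}}(A)$ is the set of polynomials vanishing under every substitution of each variable $x$ by an element of $A_{\alpha(x)}$. $I$ is the smallest ideal of $F\langle X|\mathbb{Z}\rangle$ invariant under degree-preserving endomorphisms and containing $[u_1,u_2,u_3]=[[u_1,u_2],u_3]$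 for all choices of degrees of $u_1,u_2,u_3$. For variables $z_1,\dots,z_m$ of fixed positive degrees $d_1,\dots,d_m$, $\Gamma_{0,m}$ denotes the space of multilinear polynomials in $z_1,\dots,z_m$ (with no variables of degree $0$), and $\Gamma_{0,m-1}$ the analogous space for $z_1,\dots,z_{m-1}$. *)

theory Defs
  imports Main "HOL-Library.Poly_Mapping"
begin

text \<open>Graded variables: a pair (degree, index); alpha(x) = fst x.
  Polynomials: finitely supported coefficient functions on words (lists of variables).\<close>

type_synonym gvar = "int \<times> nat"
type_synonym 'a ncpoly = "gvar list \<Rightarrow>\<^sub>0 'a"

definition pvar :: "gvar \<Rightarrow> 'a::field ncpoly" where
  "pvar x = Poly_Mapping.single [x] 1"

definition pone :: "'a::field ncpoly" where
  "pone = Poly_Mapping.single [] 1"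

definition pmul :: "'a::field ncpoly \<Rightarrow> 'a ncpoly \<Rightarrow> 'a ncpoly" where
  "pmul p q = (\<Sum>u\<in>Poly_Mapping.keys p. \<Sum>v\<in>Poly_Mapping.keys q. Poly_Mapping.single (u @ v) (Poly_Mapping.lookup p u * Poly_Mapping.lookup q v))"

definition pscale :: "'a::field \<Rightarrow> 'a ncpoly \<Rightarrow> 'a ncpoly" where
  "pscale c p = pmul (Poly_Mapping.single [] c) p"

definition pcomm :: "'a::field ncpoly \<Rightarrow> 'a ncpoly \<Rightarrow> 'a ncpoly" where
  "pcomm a b = pmul a b - pmul b a"

definition pprod :: "'a::field ncpoly list \<Rightarrow> 'a ncpoly" where
  "pprod ps = foldr pmul ps pone"

definition phomog :: "int \<Rightarrow> 'a::field ncpoly \<Rightarrow> bool" where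
  "phomog k p \<longleftrightarrow> (\<forall>w\<in>Poly_Mapping.keys p. sum_list (map fst w) = k)"

definition psubst :: "(gvar \<Rightarrow> 'a::field ncpoly) \<Rightarrow> 'a ncpoly \<Rightarrow> 'a ncpoly" where
  "psubst \<sigma> f = (\<Sum>w\<in>Poly_Mapping.keys f. pscale (Poly_Mapping.lookup f w) (pprod (map \<sigma> w)))"

definition graded_endo :: "(gvar \<Rightarrow> 'a::field ncpoly) \<Rightarrow> bool" where
  "graded_endo \<sigma> \<longleftrightarrow> (\<forall>x. phomog (fst x) (\<sigma> x))"

inductive_set Iideal :: "'a::field ncpoly set" where
  gen: "pcomm (pcomm (pvar a) (pvar b)) (pvar c) \<in> Iideal"
| zero: "0 \<in> Iideal"
| add: "f \<in> Iideal \<Longrightarrow> g \<in> Iideal \<Longrightarrow> f + g \<in> Iideal"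
| scale: "f \<in> Iideal \<Longrightarrow> pscale c f \<in> Iideal"
| lmul: "f \<in> Iideal \<Longrightarrow> pmul a f \<in> Iideal"
| rmul: "f \<in> Iideal \<Longrightarrow> pmul f a \<in> Iideal"
| endo: "f \<in> Iideal \<Longrightarrow> graded_endo \<sigma> \<Longrightarrow> psubst \<sigma> f \<in> Iideal"

text \<open>Elements of E: coefficient functions on finite subsets S of {1,2,...}
  (S = {i1<...<ik} stands for e_i1 ... e_ik), finitely supported.\<close>

definition gelem :: "(nat set \<Rightarrow> 'a::field) \<Rightarrow> bool" where
  "gelem x \<longleftrightarrow> finite {S. x S \<noteq> 0} \<and> (\<forall>S. x S \<noteq> 0 \<longrightarrow> finite S \<and> 0 \<notin> S)"

definition ginv :: "nat set \<Rightarrow> nat set \<Rightarrow> nat" where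
  "ginv A B = card {(a, b). a \<in> A \<and> b \<in> B \<and> b < a}"

text \<open>e_A e_B = (-1)^{inv(A,B)} e_{A \<union> B} if A,B disjoint, else 0.\<close>
definition gmult :: "(nat set \<Rightarrow> 'a::field) \<Rightarrow> (nat set \<Rightarrow> 'a) \<Rightarrow> nat set \<Rightarrow> 'a" where
  "gmult x y S = (\<Sum>A\<in>Pow S. (-1) ^ ginv A (S - A) * x A * y (S - A))"

definition gone :: "nat set \<Rightarrow> 'a::field" where
  "gone S = (if S = {} then 1 else 0)"

text \<open>Homogeneous component E^h_k: e_i has degree 0 for i \<le> h and 1 for i > h.\<close>
definition ghom :: "nat \<Rightarrow> int \<Rightarrow> (nat set \<Rightarrow> 'a::field) \<Rightarrow> bool" where
  "ghom h k x \<longleftrightarrow> gelem x \<and> (\<forall>S. x S \<noteq> 0 \<longrightarrow> int (card {i\<in>S. h < i}) = k)"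

definition geval :: "(gvar \<Rightarrow> nat set \<Rightarrow> 'a::field) \<Rightarrow> 'a ncpoly \<Rightarrow> nat set \<Rightarrow> 'a" where
  "geval \<phi> f S = (\<Sum>w\<in>Poly_Mapping.keys f. Poly_Mapping.lookup f w * foldr gmult (map \<phi> w) gone S)"

definition TZ :: "nat \<Rightarrow> 'a::field ncpoly set" where
  "TZ h = {f. \<forall>\<phi>. (\<forall>x. ghom h (fst x) (\<phi> x)) \<longrightarrow> geval \<phi> f = (\<lambda>_. 0)}"

text \<open>Gamma: multilinear polynomials in z 0, ..., z (n-1) (0-based indexing).\<close>
definition Gamma :: "(nat \<Rightarrow> gvar) \<Rightarrow> nat \<Rightarrow> 'a::field ncpoly set" where
  "Gamma z n = {f. \<forall>w\<in>Poly_Mapping.keys f. distinct w \<and> set w = z ` {..<n}}"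

fun atom_poly :: "(nat \<Rightarrow> gvar) \<Rightarrow> nat + nat \<times> nat \<Rightarrow> 'a::field ncpoly" where
  "atom_poly z (Inl i) = pvar (z i)"
| "atom_poly z (Inr (i, j)) = pcomm (pvar (z i)) (pvar (z j))"

definition last_in_comms :: "(nat \<Rightarrow> gvar) \<Rightarrow> nat \<Rightarrow> 'a::field ncpoly \<Rightarrow> bool" where
  "last_in_comms z m f \<longleftrightarrow>
     (\<exists>S c. finite S \<and>
        (\<forall>s\<in>S. \<forall>t\<in>set s. (case t of Inl i \<Rightarrow> i < m - 1 | Inr (i, j) \<Rightarrow> i < m \<and> j < m)) \<and>
        f = (\<Sum>s\<in>S. pscale (c s) (pprod (map (atom_poly z) s))))"

end

theory Submission
  imports Defs
begin


lemma lookup0: "x \<notin> Poly_Mapping.keys p \<Longrightarrow> Poly_Mapping.lookup p x = 0"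
  by (simp add: in_keys_iff)

lemma pmul_superset:
  assumes "finite K" "Poly_Mapping.keys p \<subseteq> K" "finite L" "Poly_Mapping.keys q \<subseteq> L"
  shows "pmul p q = (\<Sum>u\<in>K. \<Sum>v\<in>L. Poly_Mapping.single (u @ v) (Poly_Mapping.lookup p u * Poly_Mapping.lookup q v))"
proof -
  have "pmul p q = (\<Sum>u\<in>Poly_Mapping.keys p. \<Sum>v\<in>L. Poly_Mapping.single (u @ v) (Poly_Mapping.lookup p u * Poly_Mapping.lookup q v))"
    unfolding pmul_def
    by (rule sum.cong[OF refl], rule sum.mono_neutral_left) (use assms in \<open>auto simp: lookup0\<close>)
  also have "\<dots> = (\<Sum>u\<in>K. \<Sum>v\<in>L. Poly_Mapping.single (u @ v) (Poly_Mapping.lookup p u * Poly_Mapping.lookup q v))"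
    by (rule sum.mono_neutral_left) (use assms in \<open>auto simp: lookup0\<close>)
  finally show ?thesis .
qed

lemma pmul_add_left: "pmul (p + q) r = pmul p r + pmul q r"
proof -
  let ?K = "Poly_Mapping.keys p \<union> Poly_Mapping.keys q" and ?L = "Poly_Mapping.keys r"
  have k: "Poly_Mapping.keys (p+q) \<subseteq> ?K" by (rule keys_add)
  show ?thesis
    apply (subst (1 2 3) pmul_superset[where K="?K" and L="?L"])
    using k by (auto simp: lookup_add distrib_right single_add sum.distrib)
qed

lemma pmul_diff_left: "pmul (p - q) r = pmul p r - pmul q r"
proof -
  let ?K = "Poly_Mapping.keys p \<union> Poly_Mapping.keys q" and ?L = "Poly_Mapping.keys r"
  have k: "Poly_Mapping.keys (p-q) \<subseteq> ?K" by (rule keys_diff)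
  show ?thesis
    apply (subst (1 2 3) pmul_superset[where K="?K" and L="?L"])
    using k by (auto simp: lookup_minus left_diff_distrib single_diff sum_subtractf)
qed

lemma pmul_diff_right: "pmul r (p - q) = pmul r p - pmul r q"
proof -
  let ?K = "Poly_Mapping.keys p \<union> Poly_Mapping.keys q" and ?L = "Poly_Mapping.keys r"
  have k: "Poly_Mapping.keys (p-q) \<subseteq> ?K" by (rule keys_diff)
  show ?thesis
    apply (subst (1 2 3) pmul_superset[where K="?L" and L="?K"])
    using k by (auto simp: lookup_minus right_diff_distrib single_diff sum_subtractf)
qed

lemma pmul_zero_left: "pmul 0 r = 0"
  by (simp add: pmul_def)

lemma pmul_sum_left: "pmul (\<Sum>i\<in>I. g i) r = (\<Sum>i\<in>I. pmul (g i) r)"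
  by (induction I rule: infinite_finite_induct) (auto simp: pmul_zero_left pmul_add_left)

lemma pmul_single_single:
  "pmul (Poly_Mapping.single u a) (Poly_Mapping.single v b) = Poly_Mapping.single (u @ v) (a * b)"
  by (simp add: pmul_def)

lemma lookup_pscale: "Poly_Mapping.lookup (pscale c p) w = c * Poly_Mapping.lookup p w"
proof -
  have "pscale c p = (\<Sum>u\<in>{[]}. \<Sum>v\<in>Poly_Mapping.keys p. Poly_Mapping.single (u @ v) (Poly_Mapping.lookup (Poly_Mapping.single [] c) u * Poly_Mapping.lookup p v))"
    unfolding pscale_def by (rule pmul_superset) auto
  also have "\<dots> = (\<Sum>v\<in>Poly_Mapping.keys p. Poly_Mapping.single v (c * Poly_Mapping.lookup p v))"
    by simp
  finally show ?thesis
    by (auto simp: lookup_sum lookup_single when_def lookup0 intro: sum.neutral)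
qed

lemma poly_expand: "p = (\<Sum>w\<in>Poly_Mapping.keys p. Poly_Mapping.single w (Poly_Mapping.lookup p w))"
  by (rule poly_mapping_eqI) (auto simp: lookup_sum lookup_single when_def lookup0)

lemma pprod_vars: "pprod (map (atom_poly z) (map Inl b)) = Poly_Mapping.single (map z b) 1"
  by (induction b) (auto simp: pprod_def pone_def pvar_def pmul_single_single)

lemma pprod_Cons: "pprod (a # l) = pmul a (pprod l)"
  by (simp add: pprod_def)

lemma pprod_comm:
  "pprod (map (atom_poly z) (map Inl a @ Inr (i, j) # map Inl b)) =
     Poly_Mapping.single (map z a @ z i # z j # map z b) 1 - Poly_Mapping.single (map z a @ z j # z i # map z b) 1"
proof (induction a)
  case Nil
  have "pprod (map (atom_poly z) (Inr (i, j) # map Inl b)) = pmul (pcomm (pvar (z i)) (pvar (z j))) (Poly_Mapping.single (map z b) 1)"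
    by (simp only: list.map append.simps pprod_Cons pprod_vars atom_poly.simps)
  then show ?case
    by (simp add: pcomm_def pvar_def pmul_single_single pmul_diff_left)
next
  case (Cons k a)
  then show ?case
    by (simp add: pprod_Cons pvar_def pmul_single_single pmul_diff_right)
qed




definition allowed :: "nat \<Rightarrow> (nat + nat \<times> nat) list \<Rightarrow> bool" where
  "allowed m s \<longleftrightarrow> (\<forall>t\<in>set s. (case t of Inl i \<Rightarrow> i < m - 1 | Inr (i, j) \<Rightarrow> i < m \<and> j < m))"

lemma lic_iff: "last_in_comms z m f \<longleftrightarrow> (\<exists>S c. finite S \<and> (\<forall>s\<in>S. allowed m s) \<and>
        f = (\<Sum>s\<in>S. pscale (c s) (pprod (map (atom_poly z) s))))"
  unfolding last_in_comms_def allowed_def by simp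

lemma lic_zero: "last_in_comms z m 0"
  unfolding lic_iff by (rule exI[of _ "{}"]) auto

lemma lic_atom: "allowed m s \<Longrightarrow> last_in_comms z m (pscale a (pprod (map (atom_poly z) s)))"
  unfolding lic_iff by (rule exI[of _ "{s}"], rule exI[of _ "\<lambda>_. a"]) auto

lemma lic_add:
  assumes "last_in_comms z m f" "last_in_comms z m g"
  shows "last_in_comms z m (f + g)"
proof -
  obtain S1 c1 where 1: "finite S1" "\<forall>s\<in>S1. allowed m s" "f = (\<Sum>s\<in>S1. pscale (c1 s) (pprod (map (atom_poly z) s)))"
    using assms(1) unfolding lic_iff by (elim exE conjE) (rule that; assumption)
  obtain S2 c2 where 2: "finite S2" "\<forall>s\<in>S2. allowed m s" "g = (\<Sum>s\<in>S2. pscale (c2 s) (pprod (map (atom_poly z) s)))"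
    using assms(2) unfolding lic_iff by (elim exE conjE) (rule that; assumption)
  define c where "c s = (if s \<in> S1 then c1 s else 0) + (if s \<in> S2 then c2 s else 0)" for s
  let ?P = "\<lambda>s. pprod (map (atom_poly z) s)"
  have "f + g = (\<Sum>s\<in>S1 \<union> S2. pscale (c s) (?P s))"
  proof (rule poly_mapping_eqI)
    fix w
    have a: "(\<Sum>s\<in>S1 \<union> S2. (if s \<in> S1 then c1 s else 0) * Poly_Mapping.lookup (?P s) w)
       = (\<Sum>s\<in>S1. c1 s * Poly_Mapping.lookup (?P s) w)"
      using 1(1) 2(1) by (intro sum.mono_neutral_cong_right) auto
    have b: "(\<Sum>s\<in>S1 \<union> S2. (if s \<in> S2 then c2 s else 0) * Poly_Mapping.lookup (?P s) w)
       = (\<Sum>s\<in>S2. c2 s * Poly_Mapping.lookup (?P s) w)"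
      using 1(1) 2(1) by (intro sum.mono_neutral_cong_right) auto
    show "Poly_Mapping.lookup (f + g) w = Poly_Mapping.lookup (\<Sum>s\<in>S1 \<union> S2. pscale (c s) (?P s)) w"
      unfolding 1(3) 2(3) lookup_add lookup_sum lookup_pscale c_def distrib_right sum.distrib a b ..
  qed
  then show ?thesis unfolding lic_iff
  proof (intro exI conjI)
    show "finite (S1 \<union> S2)" using 1 2 by simp
    show "\<forall>s\<in>S1 \<union> S2. allowed m s" using 1(2) 2(2) by blast
  qed
qed

lemma lic_scale:
  assumes "last_in_comms z m f"
  shows "last_in_comms z m (pscale a f)"
proof -
  obtain S1 c1 where 1: "finite S1" "\<forall>s\<in>S1. allowed m s" "f = (\<Sum>s\<in>S1. pscale (c1 s) (pprod (map (atom_poly z) s)))"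
    using assms(1) unfolding lic_iff by (elim exE conjE) (rule that; assumption)
  have "pscale a f = (\<Sum>s\<in>S1. pscale (a * c1 s) (pprod (map (atom_poly z) s)))"
    by (rule poly_mapping_eqI) (simp add: 1(3) lookup_sum lookup_pscale sum_distrib_left mult.assoc)
  then show ?thesis unfolding lic_iff
  proof (intro exI conjI)
    show "finite S1" using 1 by simp
    show "\<forall>s\<in>S1. allowed m s" using 1 by simp
  qed
qed

lemma pscale_minus1: "pscale (-1) f = - f"
  by (rule poly_mapping_eqI) (simp add: lookup_pscale)

lemma lic_diff:
  assumes "last_in_comms z m f" "last_in_comms z m g"
  shows "last_in_comms z m (f - g)"
  using lic_add[OF assms(1) lic_scale[OF assms(2), of "-1"]] by (simp add: pscale_minus1)

lemma lic_sum:
  assumes "\<And>i. i \<in> I \<Longrightarrow> last_in_comms z m (g i)"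
  shows "last_in_comms z m (\<Sum>i\<in>I. g i)"
  using assms by (induction I rule: infinite_finite_induct) (auto intro: lic_zero lic_add)

lemma lic_D:
  assumes "m \<ge> 1" "\<forall>i\<in>set a. i < m - 1" "\<forall>i\<in>set b. i < m - 1"
  shows "last_in_comms z m (Poly_Mapping.single (map z a @ z (m - 1) # map z b) c
           - Poly_Mapping.single (map z (a @ b) @ [z (m - 1)]) c)"
  using assms(2,3)
proof (induction b arbitrary: a)
  case Nil
  then show ?case by (simp add: lic_zero)
next
  case (Cons j b)
  let ?x = "z (m - 1)"
  have e1: "Poly_Mapping.single (map z a @ ?x # z j # map z b) c - Poly_Mapping.single (map z a @ z j # ?x # map z b) c
     = pscale c (pprod (map (atom_poly z) (map Inl a @ Inr (m - 1, j) # map Inl b)))"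
    unfolding pprod_comm by (rule poly_mapping_eqI) (simp add: lookup_pscale lookup_minus lookup_single when_def)
  have l1: "last_in_comms z m (Poly_Mapping.single (map z a @ ?x # z j # map z b) c - Poly_Mapping.single (map z a @ z j # ?x # map z b) c)"
    unfolding e1 by (rule lic_atom) (use Cons.prems assms(1) in \<open>auto simp: allowed_def\<close>)
  have l2: "last_in_comms z m (Poly_Mapping.single (map z (a @ [j]) @ ?x # map z b) c
           - Poly_Mapping.single (map z ((a @ [j]) @ b) @ [?x]) c)"
    by (rule Cons.IH) (use Cons.prems in auto)
  have "Poly_Mapping.single (map z a @ ?x # map z (j # b)) c - Poly_Mapping.single (map z (a @ j # b) @ [?x]) c
    = (Poly_Mapping.single (map z a @ ?x # z j # map z b) c - Poly_Mapping.single (map z a @ z j # ?x # map z b) c)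
      + (Poly_Mapping.single (map z (a @ [j]) @ ?x # map z b) c
           - Poly_Mapping.single (map z ((a @ [j]) @ b) @ [?x]) c)"
    by simp
  then show ?case using lic_add[OF l1 l2] by simp
qed




definition fs :: "(nat set \<Rightarrow> 'a::field) \<Rightarrow> bool" where
  "fs y \<longleftrightarrow> (\<forall>S. infinite S \<longrightarrow> y S = 0)"

lemma gmult_infinite: "infinite S \<Longrightarrow> gmult x y S = 0"
  by (simp add: gmult_def)

lemma fs_gmult: "fs (gmult x y)"
  by (simp add: fs_def gmult_infinite)

lemma fs_gone: "fs gone"
  by (auto simp: fs_def gone_def)

lemma ginv_empty1 [simp]: "ginv {} B = 0" by (simp add: ginv_def)
lemma ginv_empty2 [simp]: "ginv A {} = 0" by (simp add: ginv_def)

lemma gmult_gone_left: "fs y \<Longrightarrow> gmult gone y = y"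
proof (rule ext)
  fix S assume fy: "fs y"
  show "gmult gone y S = y S"
  proof (cases "finite S")
    case True
    have "gmult gone y S = (\<Sum>A\<in>Pow S. if A = {} then y S else 0)"
      unfolding gmult_def gone_def by (rule sum.cong) auto
    also have "\<dots> = y S" using True by simp
    finally show ?thesis .
  qed (use fy in \<open>simp add: fs_def gmult_infinite\<close>)
qed

lemma gmult_gone_right: "fs y \<Longrightarrow> gmult y gone = y"
proof (rule ext)
  fix S assume fy: "fs y"
  show "gmult y gone S = y S"
  proof (cases "finite S")
    case True
    have "gmult y gone S = (\<Sum>A\<in>Pow S. if A = S then y S else 0)"
      unfolding gmult_def gone_def by (rule sum.cong) auto
    also have "\<dots> = y S" using True by simp
    finally show ?thesis .
  qed (use fy in \<open>simp add: fs_def gmult_infinite\<close>)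
qed

lemma ginv_Un_left:
  assumes "finite A" "finite B" "finite D" "A \<inter> B = {}"
  shows "ginv (A \<union> B) D = ginv A D + ginv B D"
proof -
  have e: "{(a, b). a \<in> A \<union> B \<and> b \<in> D \<and> b < a} = {(a, b). a \<in> A \<and> b \<in> D \<and> b < a} \<union> {(a, b). a \<in> B \<and> b \<in> D \<and> b < a}"
    by auto
  have f1: "finite {(a, b). a \<in> A \<and> b \<in> D \<and> b < a}"
    by (rule finite_subset[of _ "A \<times> D"]) (use assms in auto)
  have f2: "finite {(a, b). a \<in> B \<and> b \<in> D \<and> b < a}"
    by (rule finite_subset[of _ "B \<times> D"]) (use assms in auto)
  show ?thesis unfolding ginv_def e
    by (rule card_Un_disjoint[OF f1 f2]) (use assms in auto)
qed

lemma ginv_Un_right: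
  assumes "finite A" "finite B" "finite D" "B \<inter> D = {}"
  shows "ginv A (B \<union> D) = ginv A B + ginv A D"
proof -
  have e: "{(a, b). a \<in> A \<and> b \<in> B \<union> D \<and> b < a} = {(a, b). a \<in> A \<and> b \<in> B \<and> b < a} \<union> {(a, b). a \<in> A \<and> b \<in> D \<and> b < a}"
    by auto
  have f1: "finite {(a, b). a \<in> A \<and> b \<in> B \<and> b < a}"
    by (rule finite_subset[of _ "A \<times> B"]) (use assms in auto)
  have f2: "finite {(a, b). a \<in> A \<and> b \<in> D \<and> b < a}"
    by (rule finite_subset[of _ "A \<times> D"]) (use assms in auto)
  show ?thesis unfolding ginv_def e
    by (rule card_Un_disjoint[OF f1 f2]) (use assms in auto)
qed

lemma gmult_assoc: "gmult (gmult x y) w = gmult x (gmult y w)"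
proof (rule ext)
  fix S :: "nat set"
  show "gmult (gmult x y) w S = gmult x (gmult y w) S"
  proof (cases "finite S")
    case False then show ?thesis by (simp add: gmult_infinite)
  next
    case True
    define F where "F A B = (-1) ^ ginv A (S - A) * (-1) ^ ginv B (A - B) * x B * y (A - B) * w (S - A)" for A B
    define G where "G B C = (-1) ^ ginv B (S - B) * (-1) ^ ginv C (S - B - C) * x B * y C * w (S - B - C)" for B C
    have L: "gmult (gmult x y) w S = (\<Sum>A\<in>Pow S. \<Sum>B\<in>Pow A. F A B)"
      unfolding gmult_def F_def by (simp add: sum_distrib_left sum_distrib_right mult_ac)
    have R: "gmult x (gmult y w) S = (\<Sum>B\<in>Pow S. \<Sum>C\<in>Pow (S - B). G B C)"
      unfolding gmult_def G_def by (simp add: sum_distrib_left sum_distrib_right mult_ac Diff_Un Un_commute)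
    have "(\<Sum>A\<in>Pow S. \<Sum>B\<in>Pow A. F A B) = (\<Sum>A\<in>Pow S. \<Sum>B\<in>{B. B \<in> Pow S \<and> B \<subseteq> A}. F A B)"
      by (rule sum.cong[OF refl], rule sum.cong) auto
    also have "\<dots> = (\<Sum>B\<in>Pow S. \<Sum>A\<in>{A. A \<in> Pow S \<and> B \<subseteq> A}. F A B)"
      by (rule sum.swap_restrict) (use True in auto)
    also have "\<dots> = (\<Sum>B\<in>Pow S. \<Sum>C\<in>Pow (S - B). G B C)"
    proof (rule sum.cong[OF refl])
      fix B assume B: "B \<in> Pow S"
      show "(\<Sum>A\<in>{A. A \<in> Pow S \<and> B \<subseteq> A}. F A B) = (\<Sum>C\<in>Pow (S - B). G B C)"
      proof (rule sym, rule sum.reindex_bij_witness[of _ "\<lambda>A. A - B" "\<lambda>C. B \<union> C"])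
        fix C assume C: "C \<in> Pow (S - B)"
        have fin: "finite B" "finite C" "finite (S - B - C)" using B C True by (auto intro: finite_subset)
        have d1: "B \<inter> C = {}" "C \<inter> (S - B - C) = {}" using C by auto
        have e1: "S - (B \<union> C) = S - B - C" by auto
        have e2: "S - B = C \<union> (S - B - C)" using C by auto
        have e3: "(B \<union> C) - B = C" using C by auto
        have g1: "ginv (B \<union> C) (S - B - C) = ginv B (S - B - C) + ginv C (S - B - C)"
          by (rule ginv_Un_left) (use fin d1 in auto)
        have g2: "ginv B (S - B) = ginv B C + ginv B (S - B - C)"
        proof -
          have "ginv B (C \<union> (S - B - C)) = ginv B C + ginv B (S - B - C)"
            by (rule ginv_Un_right) (use fin d1 in auto)
          then show ?thesis by (simp only: e2[symmetric])
        qed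
        show "F (B \<union> C) B = G B C"
          unfolding F_def G_def e1 e3 g1 g2 by (simp add: power_add mult_ac)
      qed (use B in auto)
    qed
    finally show ?thesis using L R by simp
  qed
qed




lemma foldr_gmult: "fs y \<Longrightarrow> List.foldr gmult ws y = gmult (List.foldr gmult ws gone) y"
proof (induction ws)
  case Nil then show ?case by (simp add: gmult_gone_left)
next
  case (Cons a ws) then show ?case by (simp add: gmult_assoc)
qed

lemma gmult_support: "gmult a b T \<noteq> 0 \<Longrightarrow> \<exists>A\<subseteq>T. a A \<noteq> 0 \<and> b (T - A) \<noteq> 0"
proof (rule ccontr)
  assume ne: "gmult a b T \<noteq> 0" and H: "\<not> (\<exists>A\<subseteq>T. a A \<noteq> 0 \<and> b (T - A) \<noteq> 0)"
  have "\<forall>A\<in>Pow T. (-1) ^ ginv A (T - A) * a A * b (T - A) = 0" using H by auto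
  then have "gmult a b T = 0" unfolding gmult_def by (rule sum.neutral)
  then show False using ne by simp
qed

definition supp :: "nat \<Rightarrow> (nat set \<Rightarrow> 'a::field) \<Rightarrow> bool" where
  "supp N y \<longleftrightarrow> (\<forall>T. y T \<noteq> 0 \<longrightarrow> T \<subseteq> {..N})"

lemma supp_gmult: "supp N a \<Longrightarrow> supp N b \<Longrightarrow> supp N (gmult a b)"
  unfolding supp_def
proof (intro allI impI)
  fix T assume a: "\<forall>T. a T \<noteq> 0 \<longrightarrow> T \<subseteq> {..N}" and b: "\<forall>T. b T \<noteq> 0 \<longrightarrow> T \<subseteq> {..N}"
    and "gmult a b T \<noteq> 0"
  then obtain A where A: "A \<subseteq> T" "a A \<noteq> 0" "b (T - A) \<noteq> 0" using gmult_support by metis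
  have "A \<subseteq> {..N}" using a A(2) by simp
  moreover have "T - A \<subseteq> {..N}" using b A(3) by simp
  ultimately show "T \<subseteq> {..N}" by blast
qed

lemma supp_gone: "supp N gone"
  by (simp add: supp_def gone_def)

lemma supp_foldr: "(\<forall>a\<in>set ws. supp N a) \<Longrightarrow> supp N (List.foldr gmult ws gone)"
  by (induction ws) (auto simp: supp_gone supp_gmult)

lemma supp_fs: "supp N y \<Longrightarrow> fs y"
  unfolding supp_def fs_def by (metis finite_atMost finite_subset)

definition es :: "nat set \<Rightarrow> nat set \<Rightarrow> 'a::field" where
  "es S T = (if T = S then 1 else 0)"

lemma gmult_es_right:
  assumes "finite T"
  shows "gmult y (es S) T = (if S \<subseteq> T then (-1) ^ ginv (T - S) S * y (T - S) else 0)"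
proof -
  have "gmult y (es S) T = (\<Sum>A\<in>Pow T. if A = T - S then (if S \<subseteq> T then (-1) ^ ginv (T - S) S * y (T - S) else 0) else 0)"
    unfolding gmult_def es_def
  proof (rule sum.cong[OF refl])
    fix A assume A: "A \<in> Pow T"
    have "(T - A = S) \<longleftrightarrow> (S \<subseteq> T \<and> A = T - S)" using A by auto
    then show "(-1) ^ ginv A (T - A) * y A * (if T - A = S then 1 else 0) =
      (if A = T - S then if S \<subseteq> T then (-1) ^ ginv (T - S) S * y (T - S) else 0 else 0)"
      by auto
  qed
  also have "\<dots> = (if S \<subseteq> T then (-1) ^ ginv (T - S) S * y (T - S) else 0)"
    using assms by (simp add: sum.delta)
  finally show ?thesis .
qed

lemma gmult_es_left:
  assumes "finite T"
  shows "gmult (es S) y T = (if S \<subseteq> T then (-1) ^ ginv S (T - S) * y (T - S) else 0)"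
proof -
  have "gmult (es S) y T = (\<Sum>A\<in>Pow T. if A = S then (-1) ^ ginv S (T - S) * y (T - S) else 0)"
    unfolding gmult_def es_def by (rule sum.cong) auto
  also have "\<dots> = (if S \<subseteq> T then (-1) ^ ginv S (T - S) * y (T - S) else 0)"
    using assms by (simp add: sum.delta)
  finally show ?thesis .
qed

lemma ginv_below: "(\<forall>a\<in>A. a \<le> N) \<Longrightarrow> (\<forall>s\<in>S. N < s) \<Longrightarrow> ginv A S = 0"
proof -
  assume a: "\<forall>a\<in>A. a \<le> N" and s: "\<forall>s\<in>S. N < s"
  have e: "{(a, b). a \<in> A \<and> b \<in> S \<and> b < a} = {}"
  proof -
    { fix a b assume "a \<in> A" "b \<in> S" "b < a"
      then have "a \<le> N" "N < b" using a s by auto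
      then have False using \<open>b < a\<close> by simp }
    then show ?thesis by blast
  qed
  show ?thesis unfolding ginv_def e by simp
qed

lemma es_central:
  assumes "finite S" "even (card S)" "\<forall>s\<in>S. N < s" "supp N y"
  shows "gmult (es S) y = gmult y (es S)"
proof (rule ext)
  fix T :: "nat set"
  show "gmult (es S) y T = gmult y (es S) T"
  proof (cases "finite T")
    case False then show ?thesis by (simp add: gmult_infinite)
  next
    case True
    show ?thesis
    proof (cases "S \<subseteq> T \<and> y (T - S) \<noteq> 0")
      case False
      then show ?thesis using True by (auto simp: gmult_es_left gmult_es_right)
    next
      case c: True
      have sub: "T - S \<subseteq> {..N}" using c assms(4) unfolding supp_def by blast
      have g0: "ginv (T - S) S = 0" by (rule ginv_below) (use sub assms(3) in auto)
      have "{(a, b). a \<in> S \<and> b \<in> T - S \<and> b < a} = S \<times> (T - S)"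
        using sub assms(3) by fastforce
      then have "ginv S (T - S) = card S * card (T - S)"
        unfolding ginv_def by (simp add: card_cartesian_product)
      then have "even (ginv S (T - S))" using assms(2) by simp
      then show ?thesis using True c g0 by (simp add: gmult_es_left gmult_es_right)
    qed
  qed
qed

lemma es_cancel:
  assumes "finite S" "\<forall>s\<in>S. N < s" "supp N G" "gmult G (es S) = (\<lambda>_. 0)"
  shows "G = (\<lambda>_. 0)"
proof (rule ext, rule ccontr)
  fix T assume ne: "G T \<noteq> 0"
  then have sub: "T \<subseteq> {..N}" using assms(3) unfolding supp_def by blast
  then have fin: "finite (T \<union> S)" using assms(1) by (meson finite_UnI finite_atMost finite_subset)
  have disj: "T \<union> S - S = T" using sub assms(2) by fastforce
  have g0: "ginv T S = 0" by (rule ginv_below) (use sub assms(2) in auto)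
  have "gmult G (es S) (T \<union> S) = G T"
    using gmult_es_right[OF fin, of G S] disj g0 by simp
  then show False using ne assms(4) by simp
qed

lemma geval_superset:
  assumes "finite K" "Poly_Mapping.keys f \<subseteq> K"
  shows "geval \<phi> f = (\<lambda>S. \<Sum>w\<in>K. Poly_Mapping.lookup f w * List.foldr gmult (map \<phi> w) gone S)"
  unfolding geval_def
  by (rule ext, rule sum.mono_neutral_left) (use assms in \<open>auto simp: lookup0\<close>)

lemma geval_add: "geval \<phi> (f + g) = (\<lambda>S. geval \<phi> f S + geval \<phi> g S)"
proof -
  let ?K = "Poly_Mapping.keys f \<union> Poly_Mapping.keys g"
  have k: "Poly_Mapping.keys (f + g) \<subseteq> ?K" by (rule keys_add)
  show ?thesis
    apply (subst (1 2 3) geval_superset[where K="?K"])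
    using k by (auto simp: lookup_add distrib_right sum.distrib)
qed

lemma geval_diff: "geval \<phi> (f - g) = (\<lambda>S. geval \<phi> f S - geval \<phi> g S)"
proof -
  let ?K = "Poly_Mapping.keys f \<union> Poly_Mapping.keys g"
  have k: "Poly_Mapping.keys (f - g) \<subseteq> ?K" by (rule keys_diff)
  show ?thesis
    apply (subst (1 2 3) geval_superset[where K="?K"])
    using k by (auto simp: lookup_minus left_diff_distrib sum_subtractf)
qed

lemma geval_zero: "geval \<phi> 0 = (\<lambda>_. 0)"
  by (simp add: geval_def fun_eq_iff)

lemma geval_single: "geval \<phi> (Poly_Mapping.single w c) = (\<lambda>S. c * List.foldr gmult (map \<phi> w) gone S)"
  by (subst geval_superset[where K="{w}"]) auto

lemma geval_sum: "geval \<phi> (\<Sum>i\<in>I. g i) = (\<lambda>S. \<Sum>i\<in>I. geval \<phi> (g i) S)"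
  by (induction I rule: infinite_finite_induct) (auto simp: geval_zero geval_add)

lemma gmult_sum_left: "gmult (\<lambda>T. \<Sum>i\<in>I. c i * g i T) y = (\<lambda>S. \<Sum>i\<in>I. c i * gmult (g i) y S)"
proof (rule ext)
  fix S
  have "gmult (\<lambda>T. \<Sum>i\<in>I. c i * g i T) y S = (\<Sum>A\<in>Pow S. \<Sum>i\<in>I. c i * ((-1) ^ ginv A (S - A) * g i A * y (S - A)))"
    by (simp add: gmult_def sum_distrib_left sum_distrib_right mult_ac)
  also have "\<dots> = (\<Sum>i\<in>I. \<Sum>A\<in>Pow S. c i * ((-1) ^ ginv A (S - A) * g i A * y (S - A)))"
    by (rule sum.swap)
  also have "\<dots> = (\<Sum>i\<in>I. c i * gmult (g i) y S)"
    by (simp add: gmult_def sum_distrib_left)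
  finally show "gmult (\<lambda>T. \<Sum>i\<in>I. c i * g i T) y S = (\<Sum>i\<in>I. c i * gmult (g i) y S)" .
qed




lemma to_idx: "(\<forall>y\<in>set u. \<exists>i<n. y = z i) \<Longrightarrow> \<exists>a. u = map z a \<and> (\<forall>i\<in>set a. i < n)"
proof (induction u)
  case Nil then show ?case by simp
next
  case (Cons y u)
  then obtain i where i: "i < n" "y = z i" by auto
  from Cons obtain a where "u = map z a" "\<forall>i\<in>set a. i < n" by auto
  then show ?case using i by (intro exI[of _ "i # a"]) auto
qed

lemma ghom_fs: "ghom h k y \<Longrightarrow> fs y"
  unfolding ghom_def gelem_def fs_def by blast

theorem mainTheorem11:
  fixes z :: "nat \<Rightarrow> gvar" and d :: "nat \<Rightarrow> int" and h p q m :: nat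
    and f :: "'a::field_char_0 ncpoly"
  assumes "m = p + q" and "q \<ge> 1"
    and "inj_on z {..<m}"
    and "\<And>i. i < m \<Longrightarrow> fst (z i) = d i"
    and "\<And>i. i < m \<Longrightarrow> d i > 0"
    and "\<And>i. i < p \<Longrightarrow> odd (d i)"
    and "\<And>i. p \<le> i \<Longrightarrow> i < m \<Longrightarrow> even (d i)"
    and "f \<in> Gamma z m \<inter> TZ h"
  shows "\<exists>f1 f2. f - (pmul f1 (pvar (z (m - 1))) + f2) \<in> Iideal
           \<and> f1 \<in> Gamma z (m - 1) \<inter> TZ h
           \<and> last_in_comms z m f2
           \<and> f2 \<in> Gamma z m \<inter> TZ h"
proof -
  define x where "x = z (m - 1)"
  have m1: "m \<ge> 1" "m - 1 < m" using assms(1,2) by auto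
  have fG: "f \<in> Gamma z m" and fT: "f \<in> TZ h" using assms(8) by auto
  have inj: "inj_on z {..<m}" by (rule assms(3))
  have xnot: "\<And>i. i < m - 1 \<Longrightarrow> z i \<noteq> x"
  proof
    fix i assume "i < m - 1" "z i = x"
    then have "i = m - 1" using inj m1 unfolding x_def inj_on_def by auto
    then show False using \<open>i < m - 1\<close> by simp
  qed
  have zimg: "z ` {..<m} = insert x (z ` {..<m - 1})"
  proof -
    have "{..<m} = insert (m - 1) {..<m - 1}" using m1 by auto
    then show ?thesis unfolding x_def by simp
  qed
  have xnotimg: "x \<notin> z ` {..<m - 1}" using xnot by auto
  have kw: "\<exists>a b. w = map z a @ x # map z b \<and> (\<forall>i\<in>set a. i < m - 1) \<and> (\<forall>i\<in>set b. i < m - 1) \<and> distinct w"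
    if w: "w \<in> Poly_Mapping.keys f" for w
  proof -
    have dw: "distinct w" and sw: "set w = z ` {..<m}" using fG w unfolding Gamma_def by auto
    have "x \<in> set w" using sw m1 unfolding x_def by auto
    then obtain u v where uv: "w = u @ x # v" using split_list[of x w] by blast
    have xu: "x \<notin> set u" and xv: "x \<notin> set v" using dw uv by auto
    have idx: "\<exists>i<m - 1. y = z i" if y1: "y \<in> set w" and y2: "y \<noteq> x" for y
    proof -
      obtain i where i: "i < m" "y = z i" using y1 sw by auto
      have "i \<noteq> m - 1" using i y2 unfolding x_def by blast
      then show ?thesis using i by (intro exI[of _ i]) auto
    qed
    have "\<forall>y\<in>set u. \<exists>i<m - 1. y = z i" using idx xu uv by auto
    then obtain a where a: "u = map z a" "\<forall>i\<in>set a. i < m - 1" using to_idx[of u "m - 1" z] by blast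
    have "\<forall>y\<in>set v. \<exists>i<m - 1. y = z i" using idx xv uv by auto
    then obtain b where b: "v = map z b" "\<forall>i\<in>set b. i < m - 1" using to_idx[of v "m - 1" z] by blast
    have "w = map z a @ x # map z b" using uv a b by simp
    then show ?thesis using a(2) b(2) dw by blast
  qed
  have remw: "remove1 x (map z a @ x # map z b) = map z (a @ b)"
    if "\<forall>i\<in>set a. i < m - 1" for a b
  proof -
    have "x \<notin> set (map z a)" using that xnot by auto
    then show ?thesis by (simp add: remove1_append)
  qed
  have setidx: "set (map z a) \<subseteq> z ` {..<m - 1}" if "\<forall>i\<in>set a. i < m - 1" for a
    using that by auto

  define f1 where "f1 = (\<Sum>w\<in>Poly_Mapping.keys f. Poly_Mapping.single (remove1 x w) (Poly_Mapping.lookup f w))"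
  define f2 where "f2 = f - pmul f1 (pvar x)"

  have P1eq: "pmul f1 (pvar x) = (\<Sum>w\<in>Poly_Mapping.keys f. Poly_Mapping.single (remove1 x w @ [x]) (Poly_Mapping.lookup f w))"
    unfolding f1_def pmul_sum_left pvar_def pmul_single_single by simp

  have remprops: "distinct (remove1 x w) \<and> set (remove1 x w) = z ` {..<m - 1}" if "w \<in> Poly_Mapping.keys f" for w
  proof -
    have dw: "distinct w" and sw: "set w = z ` {..<m}" using fG that unfolding Gamma_def by auto
    have "set (remove1 x w) = set w - {x}" using dw by simp
    also have "\<dots> = z ` {..<m - 1}" using sw zimg xnotimg by auto
    finally show ?thesis using dw by simp
  qed

  have f1G: "f1 \<in> Gamma z (m - 1)"
  proof -
    have "Poly_Mapping.keys f1 \<subseteq> (\<Union>w\<in>Poly_Mapping.keys f. Poly_Mapping.keys (Poly_Mapping.single (remove1 x w) (Poly_Mapping.lookup f w)))"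
      unfolding f1_def by (rule keys_sum)
    also have "\<dots> \<subseteq> remove1 x ` Poly_Mapping.keys f" by auto
    finally show ?thesis unfolding Gamma_def using remprops by auto
  qed
  have f2G: "f2 \<in> Gamma z m"
  proof -
    have "Poly_Mapping.keys (pmul f1 (pvar x)) \<subseteq> (\<Union>w\<in>Poly_Mapping.keys f. Poly_Mapping.keys (Poly_Mapping.single (remove1 x w @ [x]) (Poly_Mapping.lookup f w)))"
      unfolding P1eq by (rule keys_sum)
    also have "\<dots> \<subseteq> (\<lambda>w. remove1 x w @ [x]) ` Poly_Mapping.keys f" by auto
    finally have k1: "Poly_Mapping.keys (pmul f1 (pvar x)) \<subseteq> (\<lambda>w. remove1 x w @ [x]) ` Poly_Mapping.keys f" .
    have k2: "distinct (remove1 x w @ [x]) \<and> set (remove1 x w @ [x]) = z ` {..<m}" if "w \<in> Poly_Mapping.keys f" for w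
      using remprops[OF that] xnotimg zimg by auto
    have "Poly_Mapping.keys f2 \<subseteq> Poly_Mapping.keys f \<union> Poly_Mapping.keys (pmul f1 (pvar x))"
      unfolding f2_def by (rule keys_diff)
    then show ?thesis using k1 k2 fG unfolding Gamma_def by blast
  qed

  have f2L: "last_in_comms z m f2"
  proof -
    have "f2 = (\<Sum>w\<in>Poly_Mapping.keys f. Poly_Mapping.single w (Poly_Mapping.lookup f w)
                 - Poly_Mapping.single (remove1 x w @ [x]) (Poly_Mapping.lookup f w))"
      unfolding f2_def P1eq sum_subtractf using poly_expand[of f] by simp
    also have "last_in_comms z m \<dots>"
    proof (rule lic_sum)
      fix w assume w: "w \<in> Poly_Mapping.keys f"
      then obtain a b where ab: "w = map z a @ x # map z b" "\<forall>i\<in>set a. i < m - 1" "\<forall>i\<in>set b. i < m - 1"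
        using kw by blast
      show "last_in_comms z m (Poly_Mapping.single w (Poly_Mapping.lookup f w)
                 - Poly_Mapping.single (remove1 x w @ [x]) (Poly_Mapping.lookup f w))"
        unfolding ab(1) remw[OF ab(2)] unfolding x_def using lic_D[OF m1(1) ab(2,3)] .
    qed
    finally show ?thesis .
  qed

  have G0: "geval \<phi> f1 = (\<lambda>_. 0)" if \<phi>: "\<forall>y. ghom h (fst y) (\<phi> y)" for \<phi> :: "gvar \<Rightarrow> nat set \<Rightarrow> 'a"
  proof -
    define U where "U = (\<Union>i\<in>{..<m - 1}. \<Union>{T. \<phi> (z i) T \<noteq> 0})"
    have finU: "finite U"
      unfolding U_def
    proof (intro finite_UN_I finite_lessThan finite_Union)
      fix i
      show "finite {T. \<phi> (z i) T \<noteq> 0}" using \<phi> unfolding ghom_def gelem_def by blast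
      fix T assume "T \<in> {T. \<phi> (z i) T \<noteq> 0}"
      then show "finite T" using \<phi> unfolding ghom_def gelem_def by blast
    qed
    define N where "N = Max (insert h U)"
    have UN: "\<And>u. u \<in> U \<Longrightarrow> u \<le> N" and hN: "h \<le> N"
      unfolding N_def using finU by auto
    have suppz: "supp N (\<phi> (z i))" if "i < m - 1" for i
      unfolding supp_def
    proof (intro allI impI subsetI)
      fix T t assume "\<phi> (z i) T \<noteq> 0" "t \<in> T"
      then have "t \<in> U" unfolding U_def using that by blast
      then show "t \<in> {..N}" using UN by auto
    qed
    have suppw: "supp N (List.foldr gmult (map \<phi> (map z a)) gone)" if "\<forall>i\<in>set a. i < m - 1" for a
      by (rule supp_foldr) (use that suppz in auto)
    define k where "k = nat (d (m - 1))"
    define S where "S = {N + 1..N + k}"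
    have finS: "finite S" and cardS: "card S = k" and Sbig: "\<forall>s\<in>S. N < s"
      unfolding S_def by auto
    have dpos: "d (m - 1) > 0" using assms(5) m1 by auto
    have dev: "even (d (m - 1))" using assms(1,2,7) by auto
    have evk: "even k" unfolding k_def using dev dpos by (simp add: even_nat_iff)
    have fx: "fst x = int k" unfolding x_def k_def using assms(4)[OF m1(2)] dpos by simp
    define \<phi>' where "\<phi>' = \<phi>(x := es S)"
    have ghx: "ghom h (fst x) (es S :: nat set \<Rightarrow> 'a)"
    proof -
      have "{T. (es S T :: 'a) \<noteq> 0} = {S}" by (auto simp: es_def)
      moreover have "0 \<notin> S" unfolding S_def by auto
      ultimately have "gelem (es S :: nat set \<Rightarrow> 'a)" unfolding gelem_def using finS by (auto simp: es_def)
      moreover have "{i \<in> S. h < i} = S" using Sbig hN by auto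
      ultimately show ?thesis unfolding ghom_def fx using cardS by (auto simp: es_def)
    qed
    have \<phi>': "\<forall>y. ghom h (fst y) (\<phi>' y)" unfolding \<phi>'_def using \<phi> ghx by auto
    have ev0: "geval \<phi>' f = (\<lambda>_. 0)" using fT \<phi>' unfolding TZ_def by blast
    have valw: "List.foldr gmult (map \<phi>' w) gone = gmult (List.foldr gmult (map \<phi> (remove1 x w)) gone) (es S)"
      if w: "w \<in> Poly_Mapping.keys f" for w
    proof -
      obtain a b where ab: "w = map z a @ x # map z b" "\<forall>i\<in>set a. i < m - 1" "\<forall>i\<in>set b. i < m - 1"
        using kw[OF w] by blast
      have ma: "map \<phi>' (map z a) = map \<phi> (map z a)"
        unfolding \<phi>'_def using ab(2) xnot by (auto intro!: map_cong)
      have mb: "map \<phi>' (map z b) = map \<phi> (map z b)"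
        unfolding \<phi>'_def using ab(3) xnot by (auto intro!: map_cong)
      define V where "V = List.foldr gmult (map \<phi> (map z b)) gone"
      define Ua where "Ua = map \<phi> (map z a)"
      have sV: "supp N V" unfolding V_def by (rule suppw[OF ab(3)])
      have fV: "fs V" by (rule supp_fs[OF sV])
      have "List.foldr gmult (map \<phi>' w) gone = List.foldr gmult Ua (gmult (es S) V)"
        unfolding ab(1) map_append list.map foldr_append Ua_def V_def ma mb
        by (simp add: \<phi>'_def)
      also have "\<dots> = List.foldr gmult Ua (gmult V (es S))"
        using es_central[OF finS _ Sbig sV] cardS evk by simp
      also have "\<dots> = gmult (List.foldr gmult Ua gone) (gmult V (es S))"
        by (rule foldr_gmult[OF fs_gmult])
      also have "\<dots> = gmult (gmult (List.foldr gmult Ua gone) V) (es S)"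
        by (simp add: gmult_assoc)
      also have "\<dots> = gmult (List.foldr gmult Ua V) (es S)"
        using foldr_gmult[OF fV, of Ua] by simp
      also have "\<dots> = gmult (List.foldr gmult (map \<phi> (remove1 x w)) gone) (es S)"
        unfolding ab(1) remw[OF ab(2)] Ua_def V_def by simp
      finally show ?thesis .
    qed
    define G where "G = geval \<phi> f1"
    have Geq: "G = (\<lambda>T. \<Sum>w\<in>Poly_Mapping.keys f. Poly_Mapping.lookup f w * List.foldr gmult (map \<phi> (remove1 x w)) gone T)"
      unfolding G_def f1_def geval_sum geval_single ..
    have "geval \<phi>' f = (\<lambda>T. \<Sum>w\<in>Poly_Mapping.keys f. Poly_Mapping.lookup f w * gmult (List.foldr gmult (map \<phi> (remove1 x w)) gone) (es S) T)"
      unfolding geval_def[abs_def] using valw by (intro ext sum.cong) auto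
    also have "\<dots> = gmult G (es S)"
      unfolding Geq gmult_sum_left ..
    finally have "gmult G (es S) = (\<lambda>_. 0)" using ev0 by simp
    moreover have "supp N G"
      unfolding supp_def
    proof (intro allI impI)
      fix T assume "G T \<noteq> 0"
      then obtain w where w: "w \<in> Poly_Mapping.keys f" and ne: "List.foldr gmult (map \<phi> (remove1 x w)) gone T \<noteq> 0"
        unfolding Geq by (metis (no_types, lifting) mult_zero_right sum.neutral)
      obtain a b where ab: "w = map z a @ x # map z b" "\<forall>i\<in>set a. i < m - 1" "\<forall>i\<in>set b. i < m - 1"
        using kw[OF w] by blast
      have "\<forall>i\<in>set (a @ b). i < m - 1" using ab by auto
      from suppw[OF this] ne show "T \<subseteq> {..N}"
        unfolding ab(1) remw[OF ab(2)] supp_def by blast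
    qed
    ultimately show "geval \<phi> f1 = (\<lambda>_. 0)"
      unfolding G_def using es_cancel[OF finS Sbig] by blast
  qed
  have f1T: "f1 \<in> TZ h" unfolding TZ_def using G0 by blast

  have f2T: "f2 \<in> TZ h"
    unfolding TZ_def
  proof (intro CollectI allI impI)
    fix \<phi> :: "gvar \<Rightarrow> nat set \<Rightarrow> 'a" assume \<phi>: "\<forall>y. ghom h (fst y) (\<phi> y)"
    have fx: "fs (\<phi> x)" using \<phi> ghom_fs by blast
    have e1: "geval \<phi> f = (\<lambda>_. 0)" using fT \<phi> unfolding TZ_def by blast
    have "geval \<phi> (pmul f1 (pvar x)) = (\<lambda>T. \<Sum>w\<in>Poly_Mapping.keys f. Poly_Mapping.lookup f w * gmult (List.foldr gmult (map \<phi> (remove1 x w)) gone) (\<phi> x) T)"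
      unfolding P1eq geval_sum geval_single
      using foldr_gmult[OF fx] gmult_gone_right[OF fx] by simp
    also have "\<dots> = gmult (geval \<phi> f1) (\<phi> x)"
      unfolding f1_def geval_sum geval_single gmult_sum_left ..
    also have "\<dots> = (\<lambda>_. 0)" unfolding G0[OF \<phi>] by (simp add: gmult_def fun_eq_iff)
    finally show "geval \<phi> f2 = (\<lambda>_. 0)"
      unfolding f2_def geval_diff e1 by simp
  qed

  have "f - (pmul f1 (pvar x) + f2) = 0" unfolding f2_def by simp
  then have "f - (pmul f1 (pvar x) + f2) \<in> Iideal" using Iideal.zero by simp
  then show ?thesis using f1G f1T f2G f2T f2L unfolding x_def by blast
qed


end
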